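(* Let $U\subset(0,1)^m$ be open and let $b:U\to\mathbb{R}$ be given by $b(x)=ax^\mu=a\prod_{i=1}^m x_i^{\mu_i}$ for some $a\in\mathbb{R}$ and $\mu\in\mathbb{R}^m$. If $b$ is bounded, then $b$ is weakly $(M,B,0)$-mild, where $M=\max(1,|\mu_1|,\ldots,|\mu_m|)$ and $B=\sup_{x\in U}|b(x)|$.
   Context: For $W\subset(0,1)^d$ open, $A,B>0$, $C\ge0$: $g:W\to\mathbb{R}$ is weakly $(A,B,C)$-mild if it is $C^\infty$ and $|g^{(\nu)}(x)|\le B^{C+1}A^{|\nu|}|\nu|!^{C+1}/x^\nu$ for all $x\in W$ and $\nu\in\mathbb{N}^d$, where $x^\nu=\prod x_i^{\nu_i}$, $|\nu|=\sum\nu_i$, and $g^{(\nu)}=\partial^{|\nu|}g/\partial x_1^{\nu_1}\cdots\partial x_d^{\nu_d}$. *)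

theory Defs
  imports "HOL-Analysis.Analysis"
begin

definition open_unit_cube :: "(real^'n) set" where
  "open_unit_cube = {x. \<forall>i. 0 < x$i \<and> x$i < 1}"

definition upd_coord :: "real^'n \<Rightarrow> 'n \<Rightarrow> real \<Rightarrow> real^'n" where
  "upd_coord x i t = (\<chi> j. if j = i then t else x$j)"

definition partial :: "'n \<Rightarrow> (real^'n \<Rightarrow> real) \<Rightarrow> (real^'n \<Rightarrow> real)" where
  "partial i f = (\<lambda>x. deriv (\<lambda>t. f (upd_coord x i t)) (x$i))"

text \<open>Iterated partial derivative along a list of coordinate directions
  (the head of the list is differentiated last).\<close>
fun partials :: "'n list \<Rightarrow> (real^'n \<Rightarrow> real) \<Rightarrow> (real^'n \<Rightarrow> real)" where
  "partials [] f = f"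
| "partials (i # is) f = partial i (partials is f)"

definition smooth_on :: "(real^'n) set \<Rightarrow> (real^'n \<Rightarrow> real) \<Rightarrow> bool" where
  "smooth_on W g \<longleftrightarrow>
     (\<forall>ds. continuous_on W (partials ds g) \<and>
        (\<forall>x\<in>W. \<forall>i. (\<lambda>t. partials ds g (upd_coord x i t)) differentiable (at (x$i))))"

text \<open>g^(nu): the partial derivative with multi-index nu, i.e. obtained by
  differentiating nu i times in coordinate i. For a C^infinity function this
  does not depend on the order, so we require the bound for every ordering
  (every list of directions ds with count_list ds i = nu i).\<close>
definition weakly_mild :: "(real^'n) set \<Rightarrow> real \<Rightarrow> real \<Rightarrow> real \<Rightarrow> (real^'n \<Rightarrow> real) \<Rightarrow> bool" where
  "weakly_mild W A B C g \<longleftrightarrow>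
     smooth_on W g \<and>
     (\<forall>x\<in>W. \<forall>nu::'n \<Rightarrow> nat. \<forall>ds. (\<forall>i. count_list ds i = nu i) \<longrightarrow>
        \<bar>partials ds g x\<bar> \<le>
          B powr (C + 1) * A ^ (\<Sum>i\<in>UNIV. nu i) * (fact (\<Sum>i\<in>UNIV. nu i)) powr (C + 1)
          / (\<Prod>i\<in>UNIV. (x$i) ^ (nu i)))"

end

theory Submission
  imports Defs
begin

definition ff :: "real \<Rightarrow> nat \<Rightarrow> real" where
  "ff m k = (\<Prod>j<k. (m - real j))"

lemma ff_Suc: "ff m (Suc k) = ff m k * (m - real k)"
  by (simp add: ff_def)

lemma ff_bound:
  assumes "\<bar>m\<bar> \<le> M" "1 \<le> M"
  shows "\<bar>ff m k\<bar> \<le> M ^ k * fact k"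
proof -
  have "\<bar>ff m k\<bar> = (\<Prod>j<k. \<bar>m - real j\<bar>)" by (simp add: ff_def abs_prod)
  also have "\<dots> \<le> (\<Prod>j<k. M * real (Suc j))"
  proof (rule prod_mono)
    fix j assume "j \<in> {..<k}"
    have "\<bar>m - real j\<bar> \<le> M + real j" using assms by linarith
    also have "\<dots> \<le> M * real (Suc j)" using assms
      by (simp add: algebra_simps) (metis mult_right_mono mult_1_left of_nat_0_le_iff)
    finally show "0 \<le> \<bar>m - real j\<bar> \<and> \<bar>m - real j\<bar> \<le> M * real (Suc j)" by simp
  qed
  also have "\<dots> = M ^ k * (\<Prod>j<k. real (Suc j))" by (simp add: prod.distrib)
  also have "(\<Prod>j<k. real (Suc j)) = fact k"
    by (simp add: fact_prod_Suc lessThan_atLeast0)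
  finally show ?thesis .
qed

lemma prod_fact_le:
  assumes "finite A"
  shows "(\<Prod>i\<in>A. fact (n i) :: nat) \<le> fact (\<Sum>i\<in>A. n i)"
  using assms
proof (induction A rule: finite_induct)
  case empty then show ?case by simp
next
  case (insert x A)
  have "(\<Prod>i\<in>insert x A. fact (n i) :: nat) = fact (n x) * (\<Prod>i\<in>A. fact (n i))"
    using insert by simp
  also have "\<dots> \<le> fact (n x) * fact (\<Sum>i\<in>A. n i)" using insert by simp
  also have "\<dots> \<le> fact (n x + (\<Sum>i\<in>A. n i))"
    by (rule dvd_imp_le[OF fact_fact_dvd_fact]) simp
  finally show ?case using insert by simp
qed

lemma upd_coord_nth: "upd_coord x i t $ j = (if j = i then t else x $ j)"
  by (simp add: upd_coord_def)

lemma upd_coord_same: "upd_coord x i (x $ i) = x"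
  by (simp add: upd_coord_def vec_eq_iff)

lemma deriv_prod_coord:
  fixes x :: "real^'n"
  assumes "0 < x $ i"
  shows "((\<lambda>t. \<Prod>j\<in>UNIV. c j * (upd_coord x i t $ j) powr e j) has_real_derivative
          (c i * e i * (x$i) powr (e i - 1)) * (\<Prod>j\<in>UNIV-{i}. c j * (x $ j) powr e j)) (at (x$i))"
proof -
  let ?K = "\<Prod>j\<in>UNIV-{i}. c j * (x $ j) powr e j"
  have eq: "(\<lambda>t. \<Prod>j\<in>UNIV. c j * (upd_coord x i t $ j) powr e j) = (\<lambda>t. (c i * t powr e i) * ?K)"
  proof
    fix t
    have "(\<Prod>j\<in>UNIV. c j * (upd_coord x i t $ j) powr e j)
       = (c i * (upd_coord x i t $ i) powr e i) * (\<Prod>j\<in>UNIV-{i}. c j * (upd_coord x i t $ j) powr e j)"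
      by (simp add: prod.remove)
    also have "(\<Prod>j\<in>UNIV-{i}. c j * (upd_coord x i t $ j) powr e j) = ?K"
      by (rule prod.cong) (auto simp: upd_coord_nth)
    finally show "(\<Prod>j\<in>UNIV. c j * (upd_coord x i t $ j) powr e j) = (c i * t powr e i) * ?K"
      by (simp add: upd_coord_nth)
  qed
  have "((\<lambda>t. (c i * t powr e i) * ?K) has_real_derivative (c i * (e i * (x$i) powr (e i - 1))) * ?K) (at (x$i))"
    by (intro DERIV_cmult_right DERIV_cmult has_real_derivative_powr assms)
  then show ?thesis unfolding eq by (simp add: algebra_simps)
qed


lemma upd_coord_alt: "upd_coord x i t = x + (t - x $ i) *\<^sub>R axis i 1"
  by (simp add: upd_coord_def vec_eq_iff axis_def)

lemma open_upd_vimage: "open U \<Longrightarrow> open ((\<lambda>t. upd_coord x i t) -` U)"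
  unfolding upd_coord_alt
  by (intro open_vimage continuous_intros) auto

theorem mainTheorem6:
  fixes U :: "(real^'m) set" and a :: real and mu :: "real^'m" and b :: "real^'m \<Rightarrow> real"
  assumes "open U" and "U \<subseteq> open_unit_cube"
    and "\<And>x. x \<in> U \<Longrightarrow> b x = a * (\<Prod>i\<in>UNIV. (x$i) powr (mu$i))"
    and "bounded (b ` U)"
  shows "weakly_mild U (max 1 (Max (range (\<lambda>i. \<bar>mu$i\<bar>)))) (Sup ((\<lambda>x. \<bar>b x\<bar>) ` U)) 0 b"
proof -
  note U = assms(1) and cube = assms(2) and bdef = assms(3) and bdd = assms(4)
  have pos: "0 < x $ i" if "x \<in> U" for x i using cube that by (auto simp: open_unit_cube_def)
  define G where "G ds x = a * (\<Prod>j\<in>UNIV. ff (mu$j) (count_list ds j) * (x$j) powr (mu$j - real (count_list ds j)))"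
    for ds :: "'m list" and x :: "real^'m"
  have derivG: "((\<lambda>t. partials ds b (upd_coord x i t)) has_real_derivative G (i # ds) x) (at (x$i))"
    if IH: "\<forall>y\<in>U. partials ds b y = G ds y" and xU: "x \<in> U" for ds x i
  proof -
    define c where "c j = ff (mu$j) (count_list ds j)" for j
    define e where "e j = mu$j - real (count_list ds j)" for j
    have d: "((\<lambda>t. \<Prod>j\<in>UNIV. c j * (upd_coord x i t $ j) powr e j) has_real_derivative
          (c i * e i * (x$i) powr (e i - 1)) * (\<Prod>j\<in>UNIV-{i}. c j * (x $ j) powr e j)) (at (x$i))"
      by (rule deriv_prod_coord) (rule pos[OF xU])
    have d2: "((\<lambda>t. a * (\<Prod>j\<in>UNIV. c j * (upd_coord x i t $ j) powr e j)) has_real_derivative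
          a * ((c i * e i * (x$i) powr (e i - 1)) * (\<Prod>j\<in>UNIV-{i}. c j * (x $ j) powr e j))) (at (x$i))"
      by (rule DERIV_cmult[OF d])
    have val: "a * ((c i * e i * (x$i) powr (e i - 1)) * (\<Prod>j\<in>UNIV-{i}. c j * (x $ j) powr e j)) = G (i # ds) x"
    proof -
      have "G (i # ds) x = a * ((ff (mu$i) (count_list (i#ds) i) * (x$i) powr (mu$i - real (count_list (i#ds) i)))
          * (\<Prod>j\<in>UNIV-{i}. ff (mu$j) (count_list (i#ds) j) * (x$j) powr (mu$j - real (count_list (i#ds) j))))"
        unfolding G_def by (subst prod.remove[of UNIV i]) simp_all
      also have "(\<Prod>j\<in>UNIV-{i}. ff (mu$j) (count_list (i#ds) j) * (x$j) powr (mu$j - real (count_list (i#ds) j)))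
          = (\<Prod>j\<in>UNIV-{i}. c j * (x $ j) powr e j)"
        by (rule prod.cong) (auto simp: c_def e_def)
      finally show ?thesis by (simp add: c_def e_def ff_Suc algebra_simps)
    qed
    have S: "open ((\<lambda>t. upd_coord x i t) -` U)" by (rule open_upd_vimage[OF U])
    have xi: "x $ i \<in> (\<lambda>t. upd_coord x i t) -` U" using xU by (simp add: upd_coord_same)
    show ?thesis
      apply (rule has_field_derivative_transform_within_open[OF d2[unfolded val] S xi])
      using IH by (simp add: G_def c_def e_def)
  qed
  have main: "\<forall>y\<in>U. partials ds b y = G ds y" for ds
  proof (induction ds)
    case Nil
    then show ?case by (simp add: G_def bdef ff_def)
  next
    case (Cons i ds)
    show ?case
    proof
      fix y assume yU: "y \<in> U"
      show "partials (i # ds) b y = G (i # ds) y"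
        using DERIV_imp_deriv[OF derivG[OF Cons yU]] by (simp add: partial_def)
    qed
  qed
  have nz: "\<forall>x\<in>U. x$j \<noteq> 0" for j using pos by (metis less_irrefl)
  have contG: "continuous_on U (G ds)" for ds
    unfolding G_def
    by (intro continuous_intros) (simp_all add: nz)
  have smooth: "smooth_on U b"
    unfolding smooth_on_def
  proof (intro allI conjI ballI)
    fix ds show "continuous_on U (partials ds b)"
      using contG[of ds] main[of ds] continuous_on_cong by blast
  next
    fix ds x i assume "x \<in> U"
    show "(\<lambda>t. partials ds b (upd_coord x i t)) differentiable at (x $ i)"
      using derivG[OF main \<open>x \<in> U\<close>] real_differentiable_def by blast
  qed
  define M where "M = max 1 (Max (range (\<lambda>i. \<bar>mu$i\<bar>)))"
  define B where "B = Sup ((\<lambda>x. \<bar>b x\<bar>) ` U)"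
  have M1: "1 \<le> M" by (simp add: M_def)
  have muM: "\<bar>mu$i\<bar> \<le> M" for i
    unfolding M_def by (rule max.coboundedI2, rule Max_ge) auto
  have bddab: "bdd_above ((\<lambda>x. \<bar>b x\<bar>) ` U)"
  proof -
    obtain K where "\<forall>y\<in>b ` U. norm y \<le> K" using bdd bounded_iff by blast
    then show ?thesis by (auto intro!: bdd_aboveI2[where M=K])
  qed
  have bB: "\<bar>b x\<bar> \<le> B" if "x \<in> U" for x
    unfolding B_def using bddab that by (auto intro: cSup_upper)
  have bound: "\<bar>partials ds b x\<bar> \<le>
          B powr (0 + 1) * M ^ (\<Sum>i\<in>UNIV. nu i) * (fact (\<Sum>i\<in>UNIV. nu i)) powr (0 + 1)
          / (\<Prod>i\<in>UNIV. (x$i) ^ (nu i))"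
    if xU: "x \<in> U" and cnt: "\<forall>i. count_list ds i = nu i" for x nu ds
  proof -
    have xp: "\<And>i. 0 < x $ i" using pos[OF xU] .
    have P: "0 < (\<Prod>i\<in>UNIV. (x$i) ^ (nu i))" using xp by (intro prod_pos) auto
    have pa: "(\<Prod>i\<in>UNIV. \<bar>(x$i) ^ (nu i)\<bar>) = (\<Prod>i\<in>UNIV. (x$i) ^ (nu i))"
      by (rule prod.cong) (simp_all add: xp less_imp_le)
    have "partials ds b x = G ds x" using main xU by blast
    also have "\<dots> = a * (\<Prod>j\<in>UNIV. ff (mu$j) (nu j) * ((x$j) powr (mu$j) / (x$j) ^ nu j))"
      unfolding G_def using cnt xp by (simp add: powr_diff powr_realpow)
    also have "\<dots> = (a * (\<Prod>j\<in>UNIV. (x$j) powr (mu$j))) * (\<Prod>j\<in>UNIV. ff (mu$j) (nu j)) / (\<Prod>i\<in>UNIV. (x$i) ^ (nu i))"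
      by (simp add: prod.distrib prod_dividef)
    also have "\<dots> = b x * (\<Prod>j\<in>UNIV. ff (mu$j) (nu j)) / (\<Prod>i\<in>UNIV. (x$i) ^ (nu i))"
      using bdef[OF xU] by simp
    finally have eq: "\<bar>partials ds b x\<bar> = \<bar>b x\<bar> * (\<Prod>j\<in>UNIV. \<bar>ff (mu$j) (nu j)\<bar>) / (\<Prod>i\<in>UNIV. (x$i) ^ (nu i))"
      using P pa by (simp add: abs_mult abs_prod)
    have "(\<Prod>j\<in>UNIV. \<bar>ff (mu$j) (nu j)\<bar>) \<le> (\<Prod>j\<in>UNIV. M ^ nu j * fact (nu j))"
      by (intro prod_mono conjI abs_ge_zero ff_bound muM M1)
    also have "\<dots> = M ^ (\<Sum>i\<in>UNIV. nu i) * (\<Prod>j\<in>UNIV. fact (nu j))"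
      by (simp add: prod.distrib power_sum)
    also have "(\<Prod>j\<in>UNIV. fact (nu j) :: real) = real (\<Prod>j\<in>UNIV. fact (nu j) :: nat)"
      by simp
    also have "\<dots> \<le> real (fact (\<Sum>i\<in>UNIV. nu i))"
      using prod_fact_le[of UNIV nu] by (simp only: of_nat_le_iff) simp
    finally have ffb: "(\<Prod>j\<in>UNIV. \<bar>ff (mu$j) (nu j)\<bar>) \<le> M ^ (\<Sum>i\<in>UNIV. nu i) * fact (\<Sum>i\<in>UNIV. nu i)"
      using M1 by (simp add: mult_left_mono)
    have B0: "0 \<le> B" using bB[OF xU] by linarith
    have "\<bar>b x\<bar> * (\<Prod>j\<in>UNIV. \<bar>ff (mu$j) (nu j)\<bar>) \<le> B * (M ^ (\<Sum>i\<in>UNIV. nu i) * fact (\<Sum>i\<in>UNIV. nu i))"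
      by (intro mult_mono bB xU ffb B0) (auto intro: prod_nonneg)
    then have "\<bar>partials ds b x\<bar> \<le> B * (M ^ (\<Sum>i\<in>UNIV. nu i) * fact (\<Sum>i\<in>UNIV. nu i)) / (\<Prod>i\<in>UNIV. (x$i) ^ (nu i))"
      unfolding eq using P by (simp add: divide_right_mono)
    then show ?thesis using B0 by (simp add: algebra_simps)
  qed
  show ?thesis
    unfolding weakly_mild_def M_def[symmetric] B_def[symmetric]
    using smooth bound by blast
qed

end
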